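(* Let $G$ be a connected (claw, bull)-free graph and let $C$ be an induced cycle of $G$ of length at least $4$. Then $N[C]=V(G)$, i.e. every vertex of $G$ lies on $C$ or is adjacent to a vertex of $C$.
   Context: A claw is a graph isomorphic to $K_{1,3}$; a bull is the graph obtained from a triangle by adding two pendant edges at two different vertices. A graph is (claw, bull)-free if it has no induced claw and no induced bull. $N[C]$ denotes $V(C)\cup N(V(C))$, where $N(X)=\big(\bigcup_{x\in X}N(x)\big)\setminus X$. *)

theory Defs
  imports Main
begin

definition simple_graph :: "'a set \<Rightarrow> ('a \<Rightarrow> 'a \<Rightarrow> bool) \<Rightarrow> bool" where
  "simple_graph V E \<longleftrightarrow> finite V \<and> (\<forall>x y. E x y \<longrightarrow> x \<in> V \<and> y \<in> V) \<and>
     (\<forall>x y. E x y \<longrightarrow> E y x) \<and> (\<forall>x. \<not> E x x)"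

definition connected_graph :: "'a set \<Rightarrow> ('a \<Rightarrow> 'a \<Rightarrow> bool) \<Rightarrow> bool" where
  "connected_graph V E \<longleftrightarrow> V \<noteq> {} \<and> (\<forall>x\<in>V. \<forall>y\<in>V. E\<^sup>*\<^sup>* x y)"

definition has_induced_claw :: "'a set \<Rightarrow> ('a \<Rightarrow> 'a \<Rightarrow> bool) \<Rightarrow> bool" where
  "has_induced_claw V E \<longleftrightarrow> (\<exists>a\<in>V. \<exists>b\<in>V. \<exists>c\<in>V. \<exists>d\<in>V.
     distinct [a, b, c, d] \<and> E a b \<and> E a c \<and> E a d \<and>
     \<not> E b c \<and> \<not> E b d \<and> \<not> E c d)"

definition has_induced_bull :: "'a set \<Rightarrow> ('a \<Rightarrow> 'a \<Rightarrow> bool) \<Rightarrow> bool" where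
  "has_induced_bull V E \<longleftrightarrow> (\<exists>x\<in>V. \<exists>y\<in>V. \<exists>z\<in>V. \<exists>u\<in>V. \<exists>w\<in>V.
     distinct [x, y, z, u, w] \<and> E x y \<and> E y z \<and> E x z \<and> E u x \<and> E w y \<and>
     \<not> E u y \<and> \<not> E u z \<and> \<not> E u w \<and> \<not> E w x \<and> \<not> E w z)"

definition claw_bull_free :: "'a set \<Rightarrow> ('a \<Rightarrow> 'a \<Rightarrow> bool) \<Rightarrow> bool" where
  "claw_bull_free V E \<longleftrightarrow> \<not> has_induced_claw V E \<and> \<not> has_induced_bull V E"

definition induced_cycle :: "'a set \<Rightarrow> ('a \<Rightarrow> 'a \<Rightarrow> bool) \<Rightarrow> 'a list \<Rightarrow> bool" where
  "induced_cycle V E cs \<longleftrightarrow> length cs \<ge> 3 \<and> distinct cs \<and> set cs \<subseteq> V \<and>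
     (\<forall>i<length cs. \<forall>j<length cs.
        E (cs ! i) (cs ! j) \<longleftrightarrow> (j = Suc i mod length cs \<or> i = Suc j mod length cs))"

definition closed_nbhd :: "('a \<Rightarrow> 'a \<Rightarrow> bool) \<Rightarrow> 'a set \<Rightarrow> 'a set" where
  "closed_nbhd E X = X \<union> {v. \<exists>x\<in>X. E x v}"

end

theory Submission
  imports Defs
begin

lemma sucmod: "j < k \<Longrightarrow> Suc j mod k = (if Suc j = k then 0 else Suc j)"
  by auto

lemma noclaw: "claw_bull_free V E \<Longrightarrow> a\<in>V \<Longrightarrow> b\<in>V \<Longrightarrow> c\<in>V \<Longrightarrow> d\<in>V \<Longrightarrow> distinct [a,b,c,d] \<Longrightarrow>
     E a b \<Longrightarrow> E a c \<Longrightarrow> E a d \<Longrightarrow> \<not> E b c \<Longrightarrow> \<not> E b d \<Longrightarrow> \<not> E c d \<Longrightarrow> False"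
  unfolding claw_bull_free_def has_induced_claw_def by meson
lemma nobull: "claw_bull_free V E \<Longrightarrow> x\<in>V \<Longrightarrow> y\<in>V \<Longrightarrow> z\<in>V \<Longrightarrow> u\<in>V \<Longrightarrow> w\<in>V \<Longrightarrow>
     distinct [x, y, z, u, w] \<Longrightarrow> E x y \<Longrightarrow> E y z \<Longrightarrow> E x z \<Longrightarrow> E u x \<Longrightarrow> E w y \<Longrightarrow>
     \<not> E u y \<Longrightarrow> \<not> E u z \<Longrightarrow> \<not> E u w \<Longrightarrow> \<not> E w x \<Longrightarrow> \<not> E w z \<Longrightarrow> False"
  unfolding claw_bull_free_def has_induced_bull_def by meson
lemma key:
  fixes V :: "'a set" and E :: "'a \<Rightarrow> 'a \<Rightarrow> bool" and C :: "'a list"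
  assumes sg: "simple_graph V E"
    and cb: "claw_bull_free V E"
    and ic: "induced_cycle V E C"
    and k4: "length C \<ge> 4"
    and i: "i < length C" and ui: "E (C!i) u" and uC: "u \<notin> set C"
    and uv: "E u v" and vC: "v \<notin> set C" and vn: "\<forall>c\<in>set C. \<not> E c v \<and> \<not> E v c"
  shows False
proof -
  define k where "k = length C"
  have k4': "k \<ge> 4" using k4 k_def by simp
  have adj: "\<And>a b. a < k \<Longrightarrow> b < k \<Longrightarrow> E (C!a) (C!b) \<longleftrightarrow>
      (b = (if Suc a = k then 0 else Suc a) \<or> a = (if Suc b = k then 0 else Suc b))"
    using ic unfolding induced_cycle_def k_def by (simp add: sucmod)
  have dist: "\<And>a b. a < k \<Longrightarrow> b < k \<Longrightarrow> C!a = C!b \<longleftrightarrow> a = b"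
    using ic unfolding induced_cycle_def k_def by (simp add: nth_eq_iff_index_eq)
  have inV: "\<And>a. a < k \<Longrightarrow> C!a \<in> V" using ic unfolding induced_cycle_def k_def by auto
  have inC: "\<And>a. a < k \<Longrightarrow> C!a \<in> set C" using k_def by auto
  have sym: "\<And>x y. E x y \<Longrightarrow> E y x" using sg unfolding simple_graph_def by blast
  have EV: "\<And>x y. E x y \<Longrightarrow> x \<in> V \<and> y \<in> V" using sg unfolding simple_graph_def by blast
  have irr: "\<And>x. \<not> E x x" using sg unfolding simple_graph_def by blast
  note noclaw = noclaw[OF cb] and nobull = nobull[OF cb]
  define s where "s j = (if Suc j = k then 0 else Suc j)" for j
  define p where "p j = (if j = 0 then k - 1 else j - 1)" for j
  have ik: "i < k" using i k_def by simp
  have uV: "u \<in> V" and vV: "v \<in> V" using EV uv by auto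
  have vu: "E v u" using sym uv .
  have u_ne: "\<And>a. a < k \<Longrightarrow> u \<noteq> C!a" using uC inC by metis
  have v_ne: "\<And>a. a < k \<Longrightarrow> v \<noteq> C!a" using vC inC by metis
  have vnot: "\<And>a. a < k \<Longrightarrow> \<not> E (C!a) v \<and> \<not> E v (C!a)" using vn inC by blast
  have uvne: "u \<noteq> v" using uv irr by blast
  have step: "\<And>j. j < k \<Longrightarrow> E u (C!j) \<Longrightarrow> E u (C!(s j)) \<Longrightarrow> False"
  proof -
    fix j assume j: "j < k" and a1: "E u (C!j)" and a2: "E u (C!(s j))"
    have sj: "s j < k" and ssj: "s (s j) < k" using j k4' by (auto simp: s_def)
    have e1: "E (C!j) (C!(s j))" using adj[OF j sj] by (simp add: s_def)
    have e2: "E (C!(s j)) (C!(s (s j)))" using adj[OF sj ssj] by (simp add: s_def)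
    have n1: "\<not> E (C!(s (s j))) (C!j)" using adj[OF ssj j] j k4' by (auto simp: s_def)
    have n1': "\<not> E (C!j) (C!(s (s j)))" using n1 sym by blast
    have d1: "C!j \<noteq> C!(s j)" "C!j \<noteq> C!(s (s j))" "C!(s j) \<noteq> C!(s (s j))"
      using dist[OF j sj] dist[OF j ssj] dist[OF sj ssj] j k4' by (auto simp: s_def)
    show False
    proof (cases "E u (C!(s (s j)))")
      case True
      show False
        by (rule noclaw[of u v "C!j" "C!(s (s j))"]) (use uV vV inV[OF j] inV[OF ssj] u_ne[OF j] u_ne[OF ssj] v_ne[OF j] v_ne[OF ssj] uvne d1 uv a1 True vnot[OF j] vnot[OF ssj] n1' in auto)
    next
      case False
      have F': "\<not> E (C!(s (s j))) u" using False sym by blast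
      show False
        by (rule nobull[of u "C!(s j)" "C!j" v "C!(s (s j))"]) (use uV vV inV[OF j] inV[OF sj] inV[OF ssj] u_ne[OF j] u_ne[OF sj] u_ne[OF ssj] v_ne[OF j] v_ne[OF sj] v_ne[OF ssj] uvne d1 a1 a2 e1 e2 vu vnot[OF j] vnot[OF sj] vnot[OF ssj] n1 F' sym[OF a1] sym[OF e1] sym[OF e2] in auto)
    qed
  qed
  have ps: "p i < k" "s i < k" using ik k4' by (auto simp: p_def s_def)
  have spi: "s (p i) = i" using ik k4' by (auto simp: p_def s_def)
  have iu: "E u (C!i)" using sym ui .
  show False
  proof (cases "E u (C!(s i))")
    case True then show False using step[OF ik iu] by blast
  next
    case nsi: False
    have nsi': "\<not> E (C!(s i)) u" using nsi sym by blast
    have e1: "E (C!i) (C!(s i))" using adj[OF ik ps(2)] by (simp add: s_def)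
    have e0: "E (C!(p i)) (C!i)" using adj[OF ps(1) ik] spi by (simp add: s_def)
    have n: "\<not> E (C!(p i)) (C!(s i))" using adj[OF ps] ik k4' by (auto simp: s_def p_def)
    have d: "C!(p i) \<noteq> C!(s i)" "C!(p i) \<noteq> C!i" "C!i \<noteq> C!(s i)"
      proof -
        have idx: "p i \<noteq> s i" "p i \<noteq> i" "i \<noteq> s i"
          using ik k4' unfolding s_def p_def by (simp_all split: if_split) linarith+
        show "C!(p i) \<noteq> C!(s i)" "C!(p i) \<noteq> C!i" "C!i \<noteq> C!(s i)"
          using idx dist[OF ps] dist[OF ps(1) ik] dist[OF ik ps(2)] by simp_all
      qed
    have n': "\<not> E (C!(s i)) (C!(p i))" using n sym by blast
    show False
    proof (cases "E u (C!(p i))")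
      case True
      show False
        by (rule nobull[of u "C!i" "C!(p i)" v "C!(s i)"]) (use uV vV inV[OF ik] inV[OF ps(1)] inV[OF ps(2)] u_ne[OF ik] u_ne[OF ps(1)] u_ne[OF ps(2)] v_ne[OF ik] v_ne[OF ps(1)] v_ne[OF ps(2)] uvne d iu True e0 e1 vu vnot[OF ik] vnot[OF ps(1)] vnot[OF ps(2)] n n' nsi' sym[OF True] sym[OF e0] sym[OF e1] in auto)
    next
      case False
      have F'': "\<not> E (C!(p i)) u" using False sym by blast
      show False
        by (rule noclaw[of "C!i" "C!(p i)" "C!(s i)" u]) (use uV inV[OF ik] inV[OF ps(1)] inV[OF ps(2)] u_ne[OF ik] u_ne[OF ps(1)] u_ne[OF ps(2)] d ui e0 e1 n nsi' False F'' sym[OF e0] sym[OF ui] in auto)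
    qed
  qed
qed

lemma cross:
  assumes "R\<^sup>*\<^sup>* x y" "x \<notin> N" "y \<in> N"
  shows "\<exists>a b. R a b \<and> a \<notin> N \<and> b \<in> N"
  using assms by (induction rule: rtranclp_induct) blast+

theorem lemma3:
  fixes V :: "'a set" and E :: "'a \<Rightarrow> 'a \<Rightarrow> bool" and C :: "'a list"
  assumes "simple_graph V E"
    and "connected_graph V E"
    and "claw_bull_free V E"
    and "induced_cycle V E C"
    and "length C \<ge> 4"
  shows "closed_nbhd E (set C) = V"
proof -
  have sym: "\<And>x y. E x y \<Longrightarrow> E y x" and EV: "\<And>x y. E x y \<Longrightarrow> x \<in> V \<and> y \<in> V"
    using assms(1) unfolding simple_graph_def by blast+
  have CV: "set C \<subseteq> V" using assms(4) unfolding induced_cycle_def by blast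
  have sub: "closed_nbhd E (set C) \<subseteq> V"
  proof
    fix y assume "y \<in> closed_nbhd E (set C)"
    then have "y \<in> set C \<or> (\<exists>c\<in>set C. E c y)" unfolding closed_nbhd_def by simp
    then show "y \<in> V" using CV EV by blast
  qed
  have sup: "V \<subseteq> closed_nbhd E (set C)"
  proof
    fix x assume xV: "x \<in> V"
    show "x \<in> closed_nbhd E (set C)"
    proof (rule ccontr)
      assume xN: "x \<notin> closed_nbhd E (set C)"
      have len: "0 < length C" using assms(5) by linarith
      have c0: "C!0 \<in> set C" using len by (rule nth_mem)
      have c0V: "C!0 \<in> V" using c0 CV by blast
      have c0N: "C!0 \<in> closed_nbhd E (set C)" using c0 unfolding closed_nbhd_def by simp
      have "\<forall>x\<in>V. \<forall>y\<in>V. E\<^sup>*\<^sup>* x y" using assms(2) unfolding connected_graph_def by simp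
      then have "E\<^sup>*\<^sup>* x (C!0)" using xV c0V by simp
      from cross[OF this xN c0N] obtain a b where
        ab: "E a b" "a \<notin> closed_nbhd E (set C)" "b \<in> closed_nbhd E (set C)" by blast
      have aC: "a \<notin> set C" and an: "\<forall>c\<in>set C. \<not> E c a"
        using ab(2) unfolding closed_nbhd_def by simp_all
      have an': "\<forall>c\<in>set C. \<not> E c a \<and> \<not> E a c"
      proof
        fix c assume "c \<in> set C"
        then show "\<not> E c a \<and> \<not> E a c" using an sym by metis
      qed
      have bC: "b \<notin> set C" using ab(1) an sym by metis
      then obtain c where c: "c \<in> set C" "E c b" using ab(3) unfolding closed_nbhd_def by auto
      then obtain i where i: "i < length C" "C!i = c" by (meson in_set_conv_nth)
      have ci: "E (C!i) b" using c i by simp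
      show False by (rule key[OF assms(1,3,4,5) i(1) ci bC sym[OF ab(1)] aC an'])
    qed
  qed
  show ?thesis using sub sup by (rule equalityI)
qed

end
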